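(* Let $\mathcal{E}$ and $\mathcal{F}$ be finite-dimensional real Hilbert spaces, let $\mathcal{A}:\mathcal{E}\to\mathcal{F}$ be an injective linear operator, and let $K\subseteq\mathcal{E}$ be a nonempty closed convex set. Then for any $p>0$, the metric projection $\Pi_K:\mathcal{E}\to\mathcal{E}$ is $p$-order semismooth if and only if the metric projection $\Pi_{\mathcal{A}K}:\mathcal{F}\to\mathcal{F}$ is $p$-order semismooth.
   Context: For a nonempty closed convex set $C$ in a finite-dimensional real Hilbert space, $\Pi_C(x)$ denotes the unique point of $C$ nearest to $x$ in the norm induced by the inner product. For a locally Lipschitz $f:\mathcal{E}\to\mathcal{F}$, let $D_f$ be the set of points where $f$ is differentiable; the Bouligand subdifferential is $\partial_B f(x)=\{\lim_k f'(x_k) : x_k\to x,\ x_k\in D_f,\ f'(x_k)\text{ convergent}\}$ and the Clarke generalized Jacobian is $\partial f(x)=\mathrm{conv}\,\partial_B f(x)$. For $p>0$, a locally Lipschitz $f$ is $p$-order semismooth at $x$ if $f$ is directionally differentiable at $x$ and, for any $V\in\partial f(x+h)$, $\|f(x+h)-f(x)-Vh\|=O(\|h\|^{1+p})$ as $h\to 0$; $f$ is $p$-order semismooth if it is $p$-order semismooth at every point. *)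

theory Defs
  imports "HOL-Analysis.Analysis"
begin

definition loc_lipschitz :: "('a::euclidean_space \<Rightarrow> 'b::euclidean_space) \<Rightarrow> bool" where
  "loc_lipschitz f \<longleftrightarrow>
     (\<forall>x. \<exists>e>0. \<exists>L. \<forall>y\<in>ball x e. \<forall>z\<in>ball x e. dist (f y) (f z) \<le> L * dist y z)"

definition bouligand_subdiff ::
  "('a::euclidean_space \<Rightarrow> 'b::euclidean_space) \<Rightarrow> 'a \<Rightarrow> ('a \<Rightarrow>\<^sub>L 'b) set" where
  "bouligand_subdiff f x = {V. \<exists>(X::nat \<Rightarrow> 'a) (D::nat \<Rightarrow> ('a \<Rightarrow>\<^sub>L 'b)).
      X \<longlonglongrightarrow> x \<and> (\<forall>k. (f has_derivative blinfun_apply (D k)) (at (X k))) \<and> D \<longlonglongrightarrow> V}"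

definition clarke_jac ::
  "('a::euclidean_space \<Rightarrow> 'b::euclidean_space) \<Rightarrow> 'a \<Rightarrow> ('a \<Rightarrow>\<^sub>L 'b) set" where
  "clarke_jac f x = convex hull (bouligand_subdiff f x)"

definition dir_differentiable_at ::
  "('a::euclidean_space \<Rightarrow> 'b::euclidean_space) \<Rightarrow> 'a \<Rightarrow> bool" where
  "dir_differentiable_at f x \<longleftrightarrow>
     (\<forall>h. \<exists>d. ((\<lambda>t. (f (x + t *\<^sub>R h) - f x) /\<^sub>R t) \<longlongrightarrow> d) (at_right 0))"

definition semismooth_at ::
  "real \<Rightarrow> ('a::euclidean_space \<Rightarrow> 'b::euclidean_space) \<Rightarrow> 'a \<Rightarrow> bool" where
  "semismooth_at p f x \<longleftrightarrow> loc_lipschitz f \<and> dir_differentiable_at f x \<and>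
     (\<exists>C \<delta>. \<delta> > 0 \<and> (\<forall>h. norm h < \<delta> \<longrightarrow>
        (\<forall>V\<in>clarke_jac f (x + h). norm (f (x + h) - f x - blinfun_apply V h) \<le> C * norm h powr (1 + p))))"

definition semismooth ::
  "real \<Rightarrow> ('a::euclidean_space \<Rightarrow> 'b::euclidean_space) \<Rightarrow> bool" where
  "semismooth p f \<longleftrightarrow> (\<forall>x. semismooth_at p f x)"

end

theory Submission
  imports Defs
begin

definition ssD :: "real \<Rightarrow> ('a::euclidean_space \<Rightarrow> 'b::euclidean_space) \<Rightarrow> 'a \<Rightarrow> bool" where
  "ssD p f x \<longleftrightarrow> (\<exists>C \<delta>. \<delta> > 0 \<and> (\<forall>h f'. norm h < \<delta> \<longrightarrow> (f has_derivative f') (at (x+h)) \<longrightarrow>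
      norm (f (x+h) - f x - f' h) \<le> C * norm h powr (1+p)))"

lemma semismooth_at_iff:
  fixes f :: "'a::euclidean_space \<Rightarrow> 'b::euclidean_space"
  assumes cont: "continuous_on UNIV f" and p: "p > 0"
  shows "semismooth_at p f x \<longleftrightarrow> loc_lipschitz f \<and> dir_differentiable_at f x \<and> ssD p f x"
proof
  assume "semismooth_at p f x"
  then obtain C \<delta> where L: "loc_lipschitz f" "dir_differentiable_at f x" "\<delta> > 0"
    and H: "\<And>h V. norm h < \<delta> \<Longrightarrow> V\<in>clarke_jac f (x + h) \<Longrightarrow>
        norm (f (x + h) - f x - blinfun_apply V h) \<le> C * norm h powr (1 + p)"
    unfolding semismooth_at_def by blast
  have "norm (f (x+h) - f x - f' h) \<le> C * norm h powr (1+p)"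
    if "norm h < \<delta>" "(f has_derivative f') (at (x+h))" for h f'
  proof -
    have bl: "bounded_linear f'" using that(2) has_derivative_bounded_linear by blast
    have "Blinfun f' \<in> bouligand_subdiff f (x+h)"
      unfolding bouligand_subdiff_def
      by (rule CollectI, rule exI[of _ "\<lambda>k. x+h"], rule exI[of _ "\<lambda>k. Blinfun f'"])
         (simp add: bounded_linear_Blinfun_apply[OF bl] that(2))
    then have "Blinfun f' \<in> clarke_jac f (x+h)"
      unfolding clarke_jac_def by (meson hull_subset subsetD)
    from H[OF that(1) this] show ?thesis by (simp add: bounded_linear_Blinfun_apply[OF bl])
  qed
  then show "loc_lipschitz f \<and> dir_differentiable_at f x \<and> ssD p f x"
    using L unfolding ssD_def by blast
next
  assume "loc_lipschitz f \<and> dir_differentiable_at f x \<and> ssD p f x"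
  then obtain C \<delta> where L: "loc_lipschitz f" "dir_differentiable_at f x" "\<delta> > 0"
    and H: "\<And>h f'. norm h < \<delta> \<Longrightarrow> (f has_derivative f') (at (x+h)) \<Longrightarrow>
      norm (f (x+h) - f x - f' h) \<le> C * norm h powr (1+p)"
    unfolding ssD_def by blast
  have "\<forall>V\<in>clarke_jac f (x + h). norm (f (x + h) - f x - blinfun_apply V h) \<le> C * norm h powr (1 + p)"
    if hd: "norm h < \<delta>" for h
  proof -
    let ?S = "{V. norm (f (x + h) - f x - blinfun_apply V h) \<le> C * norm h powr (1 + p)}"
    have cvx: "convex ?S"
    proof (rule convexI)
      fix V W :: "'a \<Rightarrow>\<^sub>L 'b" and u v :: real
      assume V: "V \<in> ?S" and W: "W \<in> ?S" and u: "0 \<le> u" and v: "0 \<le> v" and uv: "u + v = 1"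
      define a where "a = f (x + h) - f x - blinfun_apply V h"
      define b where "b = f (x + h) - f x - blinfun_apply W h"
      have "f (x + h) - f x - blinfun_apply (u *\<^sub>R V + v *\<^sub>R W) h = u *\<^sub>R a + v *\<^sub>R b"
      proof -
        have vv: "v = 1 - u" using uv by simp
        show ?thesis unfolding a_def b_def vv
          by (simp add: blinfun.scaleR_left blinfun.add_left blinfun.diff_left algebra_simps)
      qed
      then have "norm (f (x + h) - f x - blinfun_apply (u *\<^sub>R V + v *\<^sub>R W) h) \<le> u * norm a + v * norm b"
        using u v norm_triangle_ineq[of "u *\<^sub>R a" "v *\<^sub>R b"] by simp
      also have "\<dots> \<le> u * (C * norm h powr (1 + p)) + v * (C * norm h powr (1 + p))"
        using V W u v unfolding a_def b_def by (intro add_mono mult_left_mono) auto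
      also have "\<dots> = C * norm h powr (1 + p)" using uv by (simp add: distrib_right[symmetric])
      finally show "u *\<^sub>R V + v *\<^sub>R W \<in> ?S" by simp
    qed
    have "bouligand_subdiff f (x + h) \<subseteq> ?S"
    proof
      fix V assume "V \<in> bouligand_subdiff f (x + h)"
      then obtain X D where X: "X \<longlonglongrightarrow> x + h" and Dd: "\<And>k. (f has_derivative blinfun_apply (D k)) (at (X k))"
        and DV: "D \<longlonglongrightarrow> V"
        unfolding bouligand_subdiff_def by blast
      have Xh: "(\<lambda>k. X k - x) \<longlonglongrightarrow> h"
        using tendsto_diff[OF X tendsto_const[of x]] by simp
      have ev: "eventually (\<lambda>k. norm (X k - x) < \<delta>) sequentially"
        using hd Xh by (metis order_tendstoD(2) tendsto_norm)
      have ev2: "eventually (\<lambda>k. norm (f (X k) - f x - blinfun_apply (D k) (X k - x)) \<le> C * norm (X k - x) powr (1+p)) sequentially"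
        using ev
      proof eventually_elim
        case (elim k)
        from H[OF elim, of "blinfun_apply (D k)"] Dd[of k] show ?case by simp
      qed
      have fX: "(\<lambda>k. f (X k)) \<longlonglongrightarrow> f (x+h)"
        using cont X by (metis continuous_on_eq_continuous_at open_UNIV UNIV_I isCont_tendsto_compose)
      have lim1: "(\<lambda>k. norm (f (X k) - f x - blinfun_apply (D k) (X k - x))) \<longlonglongrightarrow> norm (f (x+h) - f x - blinfun_apply V h)"
        by (intro tendsto_intros fX blinfun.tendsto DV Xh)
      have lim2: "(\<lambda>k. C * norm (X k - x) powr (1+p)) \<longlonglongrightarrow> C * norm h powr (1+p)"
        using p by (intro tendsto_intros Xh) auto
      show "V \<in> ?S" using tendsto_le[OF _ lim2 lim1 ev2] by simp
    qed
    then have "clarke_jac f (x+h) \<subseteq> ?S"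
      unfolding clarke_jac_def using cvx by (rule hull_minimal)
    then show ?thesis by blast
  qed
  then show "semismooth_at p f x" unfolding semismooth_at_def using L by blast
qed

lemma proj_char:
  fixes S :: "'a::euclidean_space set"
  assumes "convex S" "closed S" "z \<in> S" "\<And>s. s \<in> S \<Longrightarrow> inner (a - z) (s - z) \<le> 0"
  shows "closest_point S a = z"
proof -
  have "dist a z \<le> dist a s" if "s \<in> S" for s
  proof -
    have "(dist a s)^2 = (dist a z)^2 + (norm (z - s))^2 - 2 * inner (a - z) (s - z)"
      unfolding dist_norm power2_norm_eq_inner
      by (simp add: inner_diff_left inner_diff_right inner_commute algebra_simps)
    then have "(dist a z)^2 \<le> (dist a s)^2" using assms(4)[OF that] zero_le_power2[of "norm (z - s)"] by linarith
    then show ?thesis by (simp add: power2_le_iff_abs_le)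
  qed
  then show ?thesis using closest_point_unique[OF assms(1,2,3)] by (metis)
qed

lemma proj_firm:
  fixes S :: "'a::euclidean_space set"
  assumes "convex S" "closed S" "S \<noteq> {}"
  shows "0 \<le> inner (closest_point S a - closest_point S b)
           ((a - closest_point S a) - (b - closest_point S b))"
proof -
  have "inner (a - closest_point S a) (closest_point S b - closest_point S a) \<le> 0"
    and "inner (b - closest_point S b) (closest_point S a - closest_point S b) \<le> 0"
    by (simp_all add: assms closest_point_dot closest_point_in_set)
  then show ?thesis
    by (simp add: inner_diff_left inner_diff_right inner_commute algebra_simps)
qed

lemma proj_lip:
  fixes S :: "'a::euclidean_space set"
  assumes "convex S" "closed S" "S \<noteq> {}"
  shows "norm (closest_point S a - closest_point S b) \<le> norm (a - b)"
  using closest_point_lipschitz[OF assms] by (simp add: dist_norm)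

lemma proj_cont:
  fixes S :: "'a::euclidean_space set"
  assumes "convex S" "closed S" "S \<noteq> {}"
  shows "continuous_on UNIV (closest_point S)"
  using continuous_on_closest_point[OF assms] .

lemma proj_loclip:
  fixes S :: "'a::euclidean_space set"
  assumes "convex S" "closed S" "S \<noteq> {}"
  shows "loc_lipschitz (closest_point S)"
  unfolding loc_lipschitz_def
  using closest_point_lipschitz[OF assms] by (metis mult_1 zero_less_one)

lemma proj_semismooth_iff:
  fixes S :: "'a::euclidean_space set"
  assumes "convex S" "closed S" "S \<noteq> {}" "p > 0"
  shows "semismooth p (closest_point S) \<longleftrightarrow>
     (\<forall>x. dir_differentiable_at (closest_point S) x) \<and> (\<forall>x. ssD p (closest_point S) x)"
  unfolding semismooth_def
  using semismooth_at_iff[OF proj_cont[OF assms(1-3)] assms(4)] proj_loclip[OF assms(1-3)] by blast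

lemma proj_dir_firm:
  fixes S :: "'a::euclidean_space set"
  assumes S: "convex S" "closed S" "S \<noteq> {}"
    and la: "((\<lambda>t. (closest_point S (x + t *\<^sub>R a) - closest_point S x) /\<^sub>R t) \<longlongrightarrow> Da) (at_right 0)"
    and lb: "((\<lambda>t. (closest_point S (x + t *\<^sub>R b) - closest_point S x) /\<^sub>R t) \<longlongrightarrow> Db) (at_right 0)"
  shows "0 \<le> inner (Da - Db) ((a - Da) - (b - Db))"
proof -
  let ?P = "closest_point S"
  define qa where "qa t = (?P (x + t *\<^sub>R a) - ?P x) /\<^sub>R t" for t
  define qb where "qb t = (?P (x + t *\<^sub>R b) - ?P x) /\<^sub>R t" for t
  have ev: "eventually (\<lambda>t. 0 \<le> inner (qa t - qb t) ((a - qa t) - (b - qb t))) (at_right 0)"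
    unfolding eventually_at_right_field
  proof (intro exI[of _ 1] conjI allI impI)
    fix t :: real assume ta: "0 < t" and tb: "t < 1"
    then have t: "0 < t \<and> t < 1" by simp
    then have t0: "t \<noteq> 0" by simp
    have e1: "?P (x + t *\<^sub>R a) - ?P (x + t *\<^sub>R b) = t *\<^sub>R (qa t - qb t)"
      unfolding qa_def qb_def using t0 by (simp add: algebra_simps)
    have e2: "(x + t *\<^sub>R a - ?P (x + t *\<^sub>R a)) - (x + t *\<^sub>R b - ?P (x + t *\<^sub>R b))
        = t *\<^sub>R ((a - qa t) - (b - qb t))"
      unfolding qa_def qb_def using t0 by (simp add: algebra_simps)
    have "0 \<le> inner (t *\<^sub>R (qa t - qb t)) (t *\<^sub>R ((a - qa t) - (b - qb t)))"
      using proj_firm[OF S, of "x + t *\<^sub>R a" "x + t *\<^sub>R b"] unfolding e1 e2 .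
    then have m: "0 \<le> (t * t) * inner (qa t - qb t) ((a - qa t) - (b - qb t))"
      by (simp add: algebra_simps)
    have tt: "t * t > 0" using t by simp
    show "0 \<le> inner (qa t - qb t) ((a - qa t) - (b - qb t))"
      using m tt by (simp add: zero_le_mult_iff)
  qed (simp)
  have lim: "((\<lambda>t. inner (qa t - qb t) ((a - qa t) - (b - qb t))) \<longlongrightarrow> inner (Da - Db) ((a - Da) - (b - Db))) (at_right 0)"
    using la lb unfolding qa_def[symmetric] qb_def[symmetric] by (intro tendsto_intros)
  show ?thesis using tendsto_lowerbound[OF lim ev] by simp
qed

lemma deriv_dir:
  fixes f :: "'a::real_normed_vector \<Rightarrow> 'b::real_normed_vector"
  assumes "(f has_derivative f') (at x)"
  shows "((\<lambda>t. (f (x + t *\<^sub>R z) - f x) /\<^sub>R t) \<longlongrightarrow> f' z) (at_right 0)"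
proof -
  have g: "((\<lambda>t. x + t *\<^sub>R z) has_derivative (\<lambda>t. t *\<^sub>R z)) (at 0)"
    by (auto intro!: derivative_eq_intros)
  have "((\<lambda>t. f (x + t *\<^sub>R z)) has_derivative (\<lambda>t. f' (t *\<^sub>R z))) (at 0)"
    using has_derivative_compose[OF g, of f f'] assms by simp
  then have "((\<lambda>t. f (x + t *\<^sub>R z)) has_derivative (\<lambda>t. t *\<^sub>R f' z)) (at 0)"
    using assms has_derivative_bounded_linear linear_simps(5) bounded_linear.linear by (metis (no_types, lifting) ext linear_scale)
  then have "((\<lambda>t. f (x + t *\<^sub>R z)) has_derivative (\<lambda>t. t *\<^sub>R f' z)) (at 0 within {0<..})"
    by (rule has_derivative_at_withinI)
  then have L: "((\<lambda>y. (1 / norm (y - 0)) *\<^sub>R (f (x + y *\<^sub>R z) - (f (x + 0 *\<^sub>R z) + (y - 0) *\<^sub>R f' z))) \<longlongrightarrow> 0) (at_right 0)"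
    unfolding has_derivative_within by blast
  have L2: "((\<lambda>y. (1 / norm (y - 0)) *\<^sub>R (f (x + y *\<^sub>R z) - (f (x + 0 *\<^sub>R z) + (y - 0) *\<^sub>R f' z)) + f' z) \<longlongrightarrow> 0 + f' z) (at_right 0)"
    by (intro tendsto_add L tendsto_const)
  have ev: "eventually (\<lambda>y. (1 / norm (y - 0)) *\<^sub>R (f (x + y *\<^sub>R z) - (f (x + 0 *\<^sub>R z) + (y - 0) *\<^sub>R f' z)) + f' z
      = (f (x + y *\<^sub>R z) - f x) /\<^sub>R y) (at_right (0::real))"
    unfolding eventually_at_right_field
    by (intro exI[of _ 1]) (auto simp: algebra_simps divide_simps)
  show ?thesis using Lim_transform_eventually[OF L2 ev] by simp
qed

lemma proj_deriv_firm:
  fixes S :: "'a::euclidean_space set"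
  assumes S: "convex S" "closed S" "S \<noteq> {}"
    and d: "(closest_point S has_derivative W) (at x)"
  shows "0 \<le> inner (W z) (z - W z)"
proof -
  have la: "((\<lambda>t. (closest_point S (x + t *\<^sub>R z) - closest_point S x) /\<^sub>R t) \<longlongrightarrow> W z) (at_right 0)"
    by (rule deriv_dir[OF d])
  have lb: "((\<lambda>t. (closest_point S (x + t *\<^sub>R 0) - closest_point S x) /\<^sub>R t) \<longlongrightarrow> 0) (at_right 0)"
    by simp
  show ?thesis using proj_dir_firm[OF S la lb] by simp
qed

lemma at_right_limit_subseq:
  fixes f :: "real \<Rightarrow> 'a::euclidean_space"
  assumes bnd: "\<And>t. t > 0 \<Longrightarrow> norm (f t) \<le> M"
    and cl: "\<And>s L. (\<And>n. s n > 0) \<Longrightarrow> s \<longlonglongrightarrow> 0 \<Longrightarrow> (\<lambda>n. f (s n)) \<longlonglongrightarrow> L \<Longrightarrow> R L"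
    and un: "\<And>L1 L2. R L1 \<Longrightarrow> R L2 \<Longrightarrow> L1 = L2"
  shows "\<exists>L. (f \<longlongrightarrow> L) (at_right 0)"
proof -
  define s0 :: "nat \<Rightarrow> real" where "s0 n = 1 / (real n + 1)" for n
  have s0pos: "s0 n > 0" for n unfolding s0_def by simp
  have s0lim: "s0 \<longlonglongrightarrow> 0" unfolding s0_def using LIMSEQ_inverse_real_of_nat
    by (simp add: inverse_eq_divide add.commute)
  have "bounded (range (\<lambda>n. f (s0 n)))"
    using bnd s0pos unfolding bounded_iff by blast
  then obtain L0 r where r: "strict_mono r" "((\<lambda>n. f (s0 n)) \<circ> r) \<longlonglongrightarrow> L0"
    using bounded_imp_convergent_subsequence by blast
  have RL0: "R L0"
    by (rule cl[of "s0 \<circ> r"]) (use s0pos LIMSEQ_subseq_LIMSEQ[OF s0lim r(1)] r(2) in \<open>auto simp: comp_def\<close>)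
  have "(f \<longlongrightarrow> L0) (at_right 0)"
    unfolding tendsto_iff
  proof (rule ccontr)
    assume "\<not> (\<forall>e>0. eventually (\<lambda>x. dist (f x) L0 < e) (at_right 0))"
    then obtain e where e: "e > 0" "\<not> eventually (\<lambda>x. dist (f x) L0 < e) (at_right 0)" by blast
    have "\<forall>n. \<exists>t. 0 < t \<and> t < s0 n \<and> dist (f t) L0 \<ge> e"
    proof
      fix n
      show "\<exists>t. 0 < t \<and> t < s0 n \<and> dist (f t) L0 \<ge> e"
        using e(2) s0pos[of n] unfolding eventually_at_right_field by (meson not_le)
    qed
    then obtain s where s: "\<And>n. 0 < s n" "\<And>n. s n < s0 n" "\<And>n. dist (f (s n)) L0 \<ge> e"
      by metis
    have slim: "s \<longlonglongrightarrow> 0"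
      by (rule tendsto_sandwich[of "\<lambda>n. 0" _ _ s0]) (use s s0lim in \<open>auto intro!: always_eventually less_imp_le\<close>)
    have "bounded (range (\<lambda>n. f (s n)))"
      using bnd s unfolding bounded_iff by blast
    then obtain L1 r1 where r1: "strict_mono r1" "((\<lambda>n. f (s n)) \<circ> r1) \<longlonglongrightarrow> L1"
      using bounded_imp_convergent_subsequence by blast
    have "R L1"
      by (rule cl[of "s \<circ> r1"]) (use s LIMSEQ_subseq_LIMSEQ[OF slim r1(1)] r1(2) in \<open>auto simp: comp_def\<close>)
    then have "L1 = L0" using un RL0 by blast
    then have "(\<lambda>n. dist (f (s (r1 n))) L0) \<longlonglongrightarrow> 0"
      using tendsto_dist[OF r1(2)[unfolded comp_def] tendsto_const[of L0]] by simp
    then have "eventually (\<lambda>n. dist (f (s (r1 n))) L0 < e) sequentially"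
      using e(1) by (simp add: order_tendstoD(2))
    then obtain n where "dist (f (s (r1 n))) L0 < e" using eventually_sequentially by auto
    then show False using s(3)[of "r1 n"] by simp
  qed
  then show ?thesis by blast
qed

locale core =
  fixes B Bi :: "'a::euclidean_space \<Rightarrow> 'a" and K :: "'a set"
  assumes linB: "linear B" and linBi: "linear Bi"
    and BBi: "\<And>x. B (Bi x) = x" and BiB: "\<And>x. Bi (B x) = x"
    and cK: "convex K" and clK: "closed K" and neK: "K \<noteq> {}"
begin

abbreviation "P \<equiv> closest_point K"
abbreviation "Q \<equiv> closest_point (B ` K)"
abbreviation "Bs \<equiv> adjoint B"
abbreviation "Bis \<equiv> adjoint Bi"

definition "Psi y = Bi (Q y) + Bs (y - Q y)"
definition "Phi x = B (P x) + Bis (x - P x)"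

lemma linBs: "linear Bs" using adjoint_linear[OF linB] .
lemma linBis: "linear Bis" using adjoint_linear[OF linBi] .
lemma blB: "bounded_linear B" using linB linear_conv_bounded_linear by blast
lemma blBi: "bounded_linear Bi" using linBi linear_conv_bounded_linear by blast
lemma blBs: "bounded_linear Bs" using linBs linear_conv_bounded_linear by blast
lemma blBis: "bounded_linear Bis" using linBis linear_conv_bounded_linear by blast

lemmas lsimps = linear_simps[OF blB] linear_simps[OF blBi] linear_simps[OF blBs] linear_simps[OF blBis]

lemma adjB: "inner (B x) y = inner x (Bs y)" using adjoint_works[OF linB] by simp
lemma adjBi: "inner (Bi x) y = inner x (Bis y)" using adjoint_works[OF linBi] by simp

lemma BsBis: "Bs (Bis y) = y"
proof -
  have "\<forall>x. inner x (Bs (Bis y)) = inner x y"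
    using adjB adjBi BiB by (metis)
  then show ?thesis using vector_eq_ldot by blast
qed

lemma BisBs: "Bis (Bs y) = y"
proof -
  have "\<forall>x. inner x (Bis (Bs y)) = inner x y"
    using adjB adjBi BBi by (metis)
  then show ?thesis using vector_eq_ldot by blast
qed

lemma injB: "inj B" by (metis BiB injI)

lemma cBK: "convex (B ` K)" using convex_linear_image[OF linB cK] .
lemma clBK: "closed (B ` K)" using closed_injective_linear_image[OF clK linB injB] .
lemma neBK: "B ` K \<noteq> {}" using neK by simp

lemma R1: "P (Psi y) = Bi (Q y)"
proof (rule proj_char[OF cK clK])
  obtain k where k: "k \<in> K" "Q y = B k"
    using closest_point_in_set[OF clBK neBK, of y] by blast
  then show "Bi (Q y) \<in> K" by (simp add: BiB)
  fix s assume s: "s \<in> K"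
  have "inner (Psi y - Bi (Q y)) (s - Bi (Q y)) = inner (Bs (y - Q y)) (s - Bi (Q y))"
    unfolding Psi_def by simp
  also have "\<dots> = inner (y - Q y) (B s - Q y)"
    using adjB[of "s - Bi (Q y)" "y - Q y"] by (simp add: lsimps BBi inner_commute)
  also have "\<dots> \<le> 0" using closest_point_dot[OF cBK clBK, of "B s" y] s by simp
  finally show "inner (Psi y - Bi (Q y)) (s - Bi (Q y)) \<le> 0" .
qed

lemma R2: "Q (Phi x) = B (P x)"
proof (rule proj_char[OF cBK clBK])
  show "B (P x) \<in> B ` K" using closest_point_in_set[OF clK neK, of x] by simp
  fix s assume "s \<in> B ` K"
  then obtain k where k: "k \<in> K" "s = B k" by blast
  have "inner (Phi x - B (P x)) (s - B (P x)) = inner (Bis (x - P x)) (B (k - P x))"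
    unfolding Phi_def k by (simp add: lsimps)
  also have "\<dots> = inner (x - P x) (k - P x)"
    using adjBi[of "B (k - P x)" "x - P x"] by (simp add: BiB inner_commute)
  also have "\<dots> \<le> 0" using closest_point_dot[OF cK clK k(1), of x] by (simp add: inner_commute)
  finally show "inner (Phi x - B (P x)) (s - B (P x)) \<le> 0" .
qed

lemma PsiPhi: "Psi (Phi x) = x"
  unfolding Psi_def R2 by (simp add: BiB lsimps BsBis) (simp add: Phi_def lsimps BsBis)

lemma PhiPsi: "Phi (Psi y) = y"
  unfolding Phi_def R1 by (simp add: BBi lsimps BisBs Psi_def)

lemma PQ: "Q y = B (P (Psi y))" by (simp add: R1 BBi)

lemma P_via_Q: "P x = Bi (Q (Phi x))" by (simp add: R2 BiB)

end

context core begin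

lemma Q_dir:
  assumes dd: "dir_differentiable_at P (Psi y)"
  shows "dir_differentiable_at Q y"
  unfolding dir_differentiable_at_def
proof
  fix h
  define x where "x = Psi y"
  obtain D where D: "\<And>d. ((\<lambda>t. (P (x + t *\<^sub>R d) - P x) /\<^sub>R t) \<longlongrightarrow> D d) (at_right 0)"
    using dd unfolding dir_differentiable_at_def x_def by metis
  define f where "f t = (Q (y + t *\<^sub>R h) - Q y) /\<^sub>R t" for t
  define R where "R L = (Bi L = D (Bi L + Bs (h - L)))" for L
  have key: "Bi (f t) = (P (x + t *\<^sub>R (Bi (f t) + Bs (h - f t))) - P x) /\<^sub>R t" if t: "t > 0" for t
  proof -
    have qf: "Q (y + t *\<^sub>R h) - Q y = t *\<^sub>R f t" using t unfolding f_def by simp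
    have "t *\<^sub>R (Bi (f t) + Bs (h - f t)) = Bi (t *\<^sub>R f t) + Bs (t *\<^sub>R h - t *\<^sub>R f t)"
      by (simp add: lsimps scaleR_diff_right scaleR_add_right)
    also have "\<dots> = Bi (Q (y + t *\<^sub>R h) - Q y) + Bs (t *\<^sub>R h - (Q (y + t *\<^sub>R h) - Q y))"
      unfolding qf ..
    finally have "x + t *\<^sub>R (Bi (f t) + Bs (h - f t)) = Psi (y + t *\<^sub>R h)"
      unfolding x_def Psi_def by (simp add: lsimps algebra_simps)
    then have "(P (x + t *\<^sub>R (Bi (f t) + Bs (h - f t))) - P x) /\<^sub>R t
        = (Bi (Q (y + t *\<^sub>R h)) - Bi (Q y)) /\<^sub>R t"
      unfolding x_def R1 by (simp add: R1)
    also have "\<dots> = Bi (f t)" unfolding f_def by (simp add: lsimps)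
    finally show ?thesis by simp
  qed
  have bnd: "norm (f t) \<le> norm h" if "t > 0" for t
  proof -
    have "norm (Q (y + t *\<^sub>R h) - Q y) \<le> norm (t *\<^sub>R h)"
      using proj_lip[OF cBK clBK neBK, of "y + t *\<^sub>R h" y] by simp
    then show ?thesis using that unfolding f_def by (simp add: divide_simps mult.commute)
  qed
  have cl: "R L" if s: "\<And>n. s n > 0" "s \<longlonglongrightarrow> 0" and fs: "(\<lambda>n. f (s n)) \<longlonglongrightarrow> L" for s L
  proof -
    define dd where "dd n = Bi (f (s n)) + Bs (h - f (s n))" for n
    define ds where "ds = Bi L + Bs (h - L)"
    have ddl: "dd \<longlonglongrightarrow> ds" unfolding dd_def ds_def
      by (intro tendsto_intros bounded_linear.tendsto[OF blBi] bounded_linear.tendsto[OF blBs] fs)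
    have sfl: "filterlim s (at_right 0) sequentially"
      using s by (intro tendsto_imp_filterlim_at_right) (auto intro: always_eventually)
    define g where "g n = (P (x + s n *\<^sub>R ds) - P x) /\<^sub>R s n" for n
    have gl: "g \<longlonglongrightarrow> D ds" unfolding g_def
      using filterlim_compose[OF D[of ds] sfl] by (simp add: comp_def)
    have le: "norm (Bi (f (s n)) - g n) \<le> norm (dd n - ds)" for n
    proof -
      have "Bi (f (s n)) - g n = (P (x + s n *\<^sub>R dd n) - P (x + s n *\<^sub>R ds)) /\<^sub>R s n"
        using key[OF s(1)[of n]] unfolding g_def dd_def by (simp add: algebra_simps)
      moreover have "norm (P (x + s n *\<^sub>R dd n) - P (x + s n *\<^sub>R ds)) \<le> s n * norm (dd n - ds)"
        using proj_lip[OF cK clK neK, of "x + s n *\<^sub>R dd n" "x + s n *\<^sub>R ds"] s(1)[of n]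
        by (simp add: scaleR_diff_right[symmetric])
      ultimately show ?thesis using s(1)[of n] by (simp add: divide_simps mult.commute)
    qed
    have lim0: "(\<lambda>n. norm (dd n - ds)) \<longlonglongrightarrow> 0"
      using tendsto_norm[OF LIM_zero[OF ddl]] by simp
    have "(\<lambda>n. Bi (f (s n)) - g n) \<longlonglongrightarrow> 0"
      by (rule Lim_null_comparison[OF always_eventually lim0]) (use le in blast)
    then have "(\<lambda>n. (Bi (f (s n)) - g n) + g n) \<longlonglongrightarrow> 0 + D ds"
      by (intro tendsto_add gl)
    then have l1: "(\<lambda>n. Bi (f (s n))) \<longlonglongrightarrow> D ds" by simp
    have l2: "(\<lambda>n. Bi (f (s n))) \<longlonglongrightarrow> Bi L"
      by (intro bounded_linear.tendsto[OF blBi] fs)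
    show "R L" unfolding R_def ds_def[symmetric] using LIMSEQ_unique[OF l2 l1] .
  qed
  have un: "L1 = L2" if "R L1" "R L2" for L1 L2
  proof -
    have e1: "Bi L1 = D (Bi L1 + Bs (h - L1))" and e2: "Bi L2 = D (Bi L2 + Bs (h - L2))"
      using that unfolding R_def by auto
    have "0 \<le> inner (D (Bi L1 + Bs (h - L1)) - D (Bi L2 + Bs (h - L2)))
        (((Bi L1 + Bs (h - L1)) - D (Bi L1 + Bs (h - L1))) - ((Bi L2 + Bs (h - L2)) - D (Bi L2 + Bs (h - L2))))"
      by (rule proj_dir_firm[OF cK clK neK D D])
    also have "\<dots> = inner (Bi (L1 - L2)) (Bs (L2 - L1))"
      unfolding e1[symmetric] e2[symmetric] by (simp add: lsimps algebra_simps)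
    also have "\<dots> = inner (L1 - L2) (L2 - L1)"
      using adjB[of "Bi (L1 - L2)" "L2 - L1"] by (simp add: BBi)
    also have "\<dots> = - inner (L1 - L2) (L1 - L2)"
      by (simp add: inner_diff_right inner_diff_left inner_commute)
    finally have "inner (L1 - L2) (L1 - L2) \<le> 0" by simp
    then have "inner (L1 - L2) (L1 - L2) = 0" using inner_ge_zero[of "L1 - L2"] by linarith
    then show ?thesis by simp
  qed
  show "\<exists>d. ((\<lambda>t. (Q (y + t *\<^sub>R h) - Q y) /\<^sub>R t) \<longlongrightarrow> d) (at_right 0)"
  proof -
    have "\<exists>L. (f \<longlongrightarrow> L) (at_right 0)"
    proof (rule at_right_limit_subseq[where R=R and M="norm h"])
      show "\<And>t. 0 < t \<Longrightarrow> norm (f t) \<le> norm h" by (rule bnd)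
      show "\<And>s L. (\<And>n. 0 < s n) \<Longrightarrow> s \<longlonglongrightarrow> 0 \<Longrightarrow> (\<lambda>n. f (s n)) \<longlonglongrightarrow> L \<Longrightarrow> R L"
        by (rule cl)
      show "\<And>L1 L2. R L1 \<Longrightarrow> R L2 \<Longrightarrow> L1 = L2" by (rule un)
    qed
    then show ?thesis unfolding f_def by blast
  qed
qed

end

context core begin

lemma Psi_eq: "Psi = (\<lambda>y. Bi (Q y) + Bs (y - Q y))" by (rule ext) (simp add: Psi_def)
lemma Phi_eq: "Phi = (\<lambda>x. B (P x) + Bis (x - P x))" by (rule ext) (simp add: Phi_def)
lemma P_eq: "P = (\<lambda>z. Bi (Q (Phi z)))" by (rule ext) (simp add: P_via_Q)

lemma Phi_cont: "continuous (at x) Phi"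
proof -
  have cP: "continuous (at x) P" using continuous_at_closest_point[OF cK clK neK] .
  show ?thesis unfolding Phi_eq
    by (intro continuous_add bounded_linear.continuous[OF blB cP]
        bounded_linear.continuous[OF blBis] continuous_diff continuous_ident cP)
qed

lemma Q_ssD:
  assumes ss: "ssD p P (Psi y)" and p: "p > 0"
  shows "ssD p Q y"
proof -
  define x where "x = Psi y"
  obtain C \<delta> where d0: "\<delta> > 0" and H: "\<And>h f'. norm h < \<delta> \<Longrightarrow> (P has_derivative f') (at (x + h)) \<Longrightarrow>
      norm (P (x + h) - P x - f' h) \<le> C * norm h powr (1 + p)"
    using ss unfolding ssD_def x_def by blast
  obtain cBi where cBi: "cBi > 0" "\<And>v. norm (Bi v) \<le> cBi * norm v"
    using linear_bounded_pos[OF linBi] by blast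
  obtain cBs where cBs: "cBs > 0" "\<And>v. norm (Bs v) \<le> cBs * norm v"
    using linear_bounded_pos[OF linBs] by blast
  define Lp where "Lp = cBi + 2 * cBs"
  have Lp0: "Lp > 0" unfolding Lp_def using cBi cBs by simp
  have Psi_lip: "norm (Psi a - Psi b) \<le> Lp * norm (a - b)" for a b
  proof -
    have qab: "norm (Q a - Q b) \<le> norm (a - b)" using proj_lip[OF cBK clBK neBK] .
    have "Psi a - Psi b = Bi (Q a - Q b) + Bs ((a - b) - (Q a - Q b))"
      unfolding Psi_def by (simp add: lsimps algebra_simps)
    then have "norm (Psi a - Psi b) \<le> norm (Bi (Q a - Q b)) + norm (Bs ((a - b) - (Q a - Q b)))"
      by (simp add: norm_triangle_ineq)
    also have "\<dots> \<le> cBi * norm (Q a - Q b) + cBs * norm ((a - b) - (Q a - Q b))"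
      using cBi(2) cBs(2) by (intro add_mono) auto
    also have "\<dots> \<le> cBi * norm (a - b) + cBs * (norm (a - b) + norm (a - b))"
      using qab cBi(1) cBs(1) norm_triangle_ineq4[of "a - b" "Q a - Q b"]
      by (intro add_mono mult_left_mono) auto
    finally show ?thesis unfolding Lp_def by (simp add: algebra_simps)
  qed
  define C' where "C' = (cBi + cBs) * (\<bar>C\<bar> * Lp powr (1 + p))"
  have "norm (Q (y + h) - Q y - V' h) \<le> C' * norm h powr (1 + p)"
    if hn: "norm h < \<delta> / Lp" and dQ: "(Q has_derivative V') (at (y + h))" for h V'
  proof -
    define w where "w = y + h"
    define x' where "x' = Psi w"
    define d where "d = x' - x"
    have dn: "norm d \<le> Lp * norm h" unfolding d_def x'_def x_def w_def using Psi_lip[of "y + h" y] by simp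
    have dlt: "norm d < \<delta>" using dn hn Lp0 by (simp add: field_simps)
    have blV: "bounded_linear V'" using dQ has_derivative_bounded_linear by blast
    define T where "T v = Bi (V' v) + Bs (v - V' v)" for v
    have dPsi: "(Psi has_derivative T) (at w)"
      unfolding Psi_eq T_def[abs_def] w_def
      by (intro has_derivative_add bounded_linear.has_derivative[OF blBi dQ]
          bounded_linear.has_derivative[OF blBs] has_derivative_diff has_derivative_ident dQ)
    have blT: "bounded_linear T" using dPsi has_derivative_bounded_linear by blast
    have T0: "v = 0" if Tv: "T v = 0" for v
    proof -
      define b where "b = v - V' v"
      have firm: "0 \<le> inner (V' v) b"
        unfolding b_def by (rule proj_deriv_firm[OF cBK clBK neBK dQ])
      have "Bi (V' v) = - Bs b" using Tv unfolding T_def b_def by (simp add: eq_neg_iff_add_eq_0)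
      then have "B (Bi (V' v)) = B (- Bs b)" by simp
      then have Vv: "V' v = - B (Bs b)" by (simp add: BBi lsimps)
      have "inner (V' v) b = - inner (Bs b) (Bs b)" unfolding Vv using adjB[of "Bs b" b] by simp
      then have "inner (Bs b) (Bs b) = 0" using firm inner_ge_zero[of "Bs b"] by linarith
      then have "Bs b = 0" by simp
      then have b0: "b = 0" using BisBs[of b] by (simp add: lsimps)
      then have "V' v = 0" using Vv by (simp add: lsimps)
      then show "v = 0" using b0 unfolding b_def by simp
    qed
    have injT: "inj T"
    proof (rule injI)
      fix a b assume "T a = T b"
      then have "T (a - b) = 0" using linear_simps(2)[OF blT, of a b] by simp
      then show "a = b" using T0[of "a - b"] by simp
    qed
    obtain Tinv where linTinv: "linear Tinv" and TinvT: "Tinv \<circ> T = id"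
      using linear_injective_left_inverse[OF bounded_linear.linear[OF blT] injT] by blast
    have TinvT': "Tinv (T v) = v" for v using TinvT by (metis comp_apply id_apply)
    have blTinv: "bounded_linear Tinv" using linTinv linear_conv_bounded_linear by blast
    have PhiX: "Phi x' = w" unfolding x'_def by (rule PhiPsi)
    have dPhi: "(Phi has_derivative Tinv) (at x')"
    proof (rule has_derivative_inverse_basic[where f=Psi and f'=T and T=UNIV])
      show "(Psi has_derivative T) (at (Phi x'))" unfolding PhiX by (rule dPsi)
      show "bounded_linear Tinv" by (rule blTinv)
      show "Tinv \<circ> T = id" by (rule TinvT)
      show "continuous (at x') Phi" by (rule Phi_cont)
      show "\<And>z. z \<in> UNIV \<Longrightarrow> Psi (Phi z) = z" by (simp add: PsiPhi)
    qed auto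
    define W where "W v = Bi (V' (Tinv v))" for v
    have dQ': "(Q has_derivative V') (at (Phi x'))" unfolding PhiX w_def by (rule dQ)
    have dP: "(P has_derivative W) (at x')"
    proof -
      have "((\<lambda>z. Bi (Q (Phi z))) has_derivative (\<lambda>v. Bi (V' (Tinv v)))) (at x')"
        by (intro bounded_linear.has_derivative[OF blBi] has_derivative_compose[OF dPhi dQ'])
      then show ?thesis unfolding W_def[abs_def] by (subst P_eq)
    qed
    have blW: "bounded_linear W" using dP has_derivative_bounded_linear by blast
    have WT: "W (T v) = Bi (V' v)" for v unfolding W_def TinvT' ..
    have xd: "x + d = x'" unfolding d_def by simp
    define err where "err = P x' - P x - W d"
    have errb: "norm err \<le> C * norm d powr (1 + p)"
      using H[OF dlt, of W] dP unfolding xd err_def by simp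
    have errb2: "norm err \<le> \<bar>C\<bar> * Lp powr (1 + p) * norm h powr (1 + p)"
    proof -
      have "C * norm d powr (1 + p) \<le> \<bar>C\<bar> * norm d powr (1 + p)"
        by (intro mult_right_mono) auto
      also have "\<dots> \<le> \<bar>C\<bar> * (Lp * norm h) powr (1 + p)"
        using p dn by (intro mult_left_mono powr_mono2) auto
      also have "\<dots> = \<bar>C\<bar> * Lp powr (1 + p) * norm h powr (1 + p)"
        by (simp add: powr_mult)
      finally show ?thesis using errb by simp
    qed
    define e where "e = Q w - Q y - V' h"
    have Bie: "Bi e = P x' - P x - Bi (V' h)"
      unfolding e_def x'_def x_def by (simp add: R1 lsimps)
    have dTh: "d - T h = Bi e - Bs e"
      unfolding d_def x'_def x_def e_def T_def Psi_def w_def by (simp add: lsimps algebra_simps)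
    define z where "z = Bi e - Bs e"
    have Wz: "W z = Bi e - err"
    proof -
      have "W z = W d - W (T h)" unfolding z_def dTh[symmetric] using linear_simps(2)[OF blW] by simp
      then show ?thesis unfolding WT err_def Bie by (simp add: algebra_simps)
    qed
    have "0 \<le> inner (W z) (z - W z)" by (rule proj_deriv_firm[OF cK clK neK dP])
    also have "\<dots> = inner (Bi e - err) (err - Bs e)"
    proof -
      have "z - W z = err - Bs e" unfolding Wz by (simp add: z_def)
      then show ?thesis by (metis Wz)
    qed
    also have "\<dots> = inner (Bi e) err - inner (Bi e) (Bs e) - inner err err + inner err (Bs e)"
      by (simp add: inner_diff_left inner_diff_right)
    finally have ineq: "inner (Bi e) (Bs e) \<le> inner (Bi e) err + inner err (Bs e)"
      using inner_ge_zero[of err] by linarith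
    have "inner (Bi e) (Bs e) = inner e e" using adjB[of "Bi e" e] by (simp add: BBi)
    then have "(norm e)^2 \<le> inner (Bi e) err + inner err (Bs e)"
      using ineq by (simp add: power2_norm_eq_inner)
    also have "\<dots> \<le> norm (Bi e) * norm err + norm err * norm (Bs e)"
      by (intro add_mono norm_cauchy_schwarz)
    also have "\<dots> \<le> (cBi * norm e) * norm err + norm err * (cBs * norm e)"
      using cBi(2) cBs(2) by (intro add_mono mult_right_mono mult_left_mono) auto
    also have "\<dots> = norm e * ((cBi + cBs) * norm err)" by (simp add: algebra_simps)
    finally have sq: "norm e * norm e \<le> norm e * ((cBi + cBs) * norm err)" by (simp add: power2_eq_square)
    have ee: "norm e \<le> (cBi + cBs) * norm err"
    proof (cases "norm e = 0")
      case True then show ?thesis using cBi cBs by simp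
    next
      case False then have "norm e > 0" by simp
      then show ?thesis using sq by simp
    qed
    also have "\<dots> \<le> (cBi + cBs) * (\<bar>C\<bar> * Lp powr (1 + p) * norm h powr (1 + p))"
      using errb2 cBi cBs by (intro mult_left_mono) auto
    finally show ?thesis unfolding C'_def e_def w_def by (simp add: mult.assoc)
  qed
  moreover have "\<delta> / Lp > 0" using d0 Lp0 by simp
  ultimately show ?thesis unfolding ssD_def by blast
qed

lemma core_ss:
  assumes ss: "semismooth p P" and p: "p > 0"
  shows "semismooth p Q"
proof -
  have "(\<forall>x. dir_differentiable_at P x) \<and> (\<forall>x. ssD p P x)"
    using ss proj_semismooth_iff[OF cK clK neK p] by blast
  then show ?thesis
    using proj_semismooth_iff[OF cBK clBK neBK p] Q_dir Q_ssD p by blast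
qed

end

locale iso =
  fixes J :: "'a::euclidean_space \<Rightarrow> 'b::euclidean_space" and S :: "'a set"
  assumes linJ: "linear J" and nJ: "\<And>x. norm (J x) = norm x"
    and cS: "convex S" and clS: "closed S" and neS: "S \<noteq> {}"
begin

abbreviation "P \<equiv> closest_point S"
abbreviation "PJ \<equiv> closest_point (J ` S)"
abbreviation "Js \<equiv> adjoint J"

lemma linJs: "linear Js" using adjoint_linear[OF linJ] .
lemma blJ: "bounded_linear J" using linJ linear_conv_bounded_linear by blast
lemma blJs: "bounded_linear Js" using linJs linear_conv_bounded_linear by blast
lemmas lsimps = linear_simps[OF blJ] linear_simps[OF blJs]
lemma adjJ: "inner (J x) y = inner x (Js y)" using adjoint_works[OF linJ] by simp

lemma innJ: "inner (J x) (J y) = inner x y"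
proof -
  have "inner (J (x + y)) (J (x + y)) = inner (x + y) (x + y)"
    using nJ[of "x + y"] by (simp add: dot_square_norm)
  moreover have "inner (J x) (J x) = inner x x" "inner (J y) (J y) = inner y y"
    using nJ[of x] nJ[of y] by (simp_all add: dot_square_norm)
  ultimately show ?thesis
    by (simp add: lsimps inner_add_left inner_add_right inner_commute)
qed

lemma JsJ: "Js (J x) = x"
proof -
  have "\<forall>z. inner z (Js (J x)) = inner z x" using adjJ innJ by metis
  then show ?thesis using vector_eq_ldot by blast
qed

lemma injJ: "inj J" by (metis JsJ injI)
lemma cJS: "convex (J ` S)" using convex_linear_image[OF linJ cS] .
lemma clJS: "closed (J ` S)" using closed_injective_linear_image[OF clS linJ injJ] .
lemma neJS: "J ` S \<noteq> {}" using neS by simp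

lemma Rel1: "PJ z = J (P (Js z))"
proof (rule proj_char[OF cJS clJS])
  show "J (P (Js z)) \<in> J ` S" using closest_point_in_set[OF clS neS] by simp
  fix s assume "s \<in> J ` S"
  then obtain k where k: "k \<in> S" "s = J k" by blast
  have "inner (z - J (P (Js z))) (s - J (P (Js z))) = inner (J (k - P (Js z))) (z - J (P (Js z)))"
    unfolding k by (simp add: lsimps inner_commute)
  also have "\<dots> = inner (k - P (Js z)) (Js z - P (Js z))"
    unfolding adjJ by (simp add: lsimps JsJ)
  also have "\<dots> \<le> 0" using closest_point_dot[OF cS clS k(1), of "Js z"] by (simp add: inner_commute)
  finally show "inner (z - J (P (Js z))) (s - J (P (Js z))) \<le> 0" .
qed

lemma Rel2: "P x = Js (PJ (J x))" by (simp add: Rel1 JsJ)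

lemma normJs: "norm (Js v) \<le> norm v"
proof -
  have "(norm (Js v))^2 = inner (J (Js v)) v" using adjJ[of "Js v" v] by (simp add: power2_norm_eq_inner)
  also have "\<dots> \<le> norm (J (Js v)) * norm v" by (rule norm_cauchy_schwarz)
  also have "\<dots> = norm (Js v) * norm v" by (simp add: nJ)
  finally have "norm (Js v) * norm (Js v) \<le> norm (Js v) * norm v" by (simp add: power2_eq_square)
  then show ?thesis by (cases "norm (Js v) = 0") auto
qed

lemma dir_fw: assumes "dir_differentiable_at P (Js y)" shows "dir_differentiable_at PJ y"
  unfolding dir_differentiable_at_def
proof
  fix h
  obtain d where d: "((\<lambda>t. (P (Js y + t *\<^sub>R Js h) - P (Js y)) /\<^sub>R t) \<longlongrightarrow> d) (at_right 0)"
    using assms unfolding dir_differentiable_at_def by blast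
  have eq: "(\<lambda>t. (PJ (y + t *\<^sub>R h) - PJ y) /\<^sub>R t) = (\<lambda>t. J ((P (Js y + t *\<^sub>R Js h) - P (Js y)) /\<^sub>R t))"
    by (rule ext) (simp add: Rel1 lsimps)
  show "\<exists>d. ((\<lambda>t. (PJ (y + t *\<^sub>R h) - PJ y) /\<^sub>R t) \<longlongrightarrow> d) (at_right 0)"
    unfolding eq using bounded_linear.tendsto[OF blJ d] by blast
qed

lemma dir_bw: assumes "dir_differentiable_at PJ (J x)" shows "dir_differentiable_at P x"
  unfolding dir_differentiable_at_def
proof
  fix h
  obtain d where d: "((\<lambda>t. (PJ (J x + t *\<^sub>R J h) - PJ (J x)) /\<^sub>R t) \<longlongrightarrow> d) (at_right 0)"
    using assms unfolding dir_differentiable_at_def by blast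
  have eq: "(\<lambda>t. (P (x + t *\<^sub>R h) - P x) /\<^sub>R t) = (\<lambda>t. Js ((PJ (J x + t *\<^sub>R J h) - PJ (J x)) /\<^sub>R t))"
    by (rule ext) (simp add: Rel2 lsimps)
  show "\<exists>d. ((\<lambda>t. (P (x + t *\<^sub>R h) - P x) /\<^sub>R t) \<longlongrightarrow> d) (at_right 0)"
    unfolding eq using bounded_linear.tendsto[OF blJs d] by blast
qed

lemma ss_fw: assumes "ssD p P (Js y)" and p: "p > 0" shows "ssD p PJ y"
proof -
  obtain C \<delta> where d0: "\<delta> > 0" and H: "\<And>h f'. norm h < \<delta> \<Longrightarrow> (P has_derivative f') (at (Js y + h)) \<Longrightarrow>
      norm (P (Js y + h) - P (Js y) - f' h) \<le> C * norm h powr (1 + p)"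
    using assms unfolding ssD_def by blast
  have "norm (PJ (y + h) - PJ y - V' h) \<le> \<bar>C\<bar> * norm h powr (1 + p)"
    if hn: "norm h < \<delta>" and dQ: "(PJ has_derivative V') (at (y + h))" for h V'
  proof -
    define w where "w = y + h"
    have Peq: "P = (\<lambda>z. Js (PJ (w + J (z - Js w))))"
      by (rule ext) (simp add: Rel1 lsimps JsJ)
    have "((\<lambda>z. w + J (z - Js w)) has_derivative (\<lambda>v. 0 + J (v - 0))) (at (Js w))"
      by (intro has_derivative_add has_derivative_const bounded_linear.has_derivative[OF blJ]
          has_derivative_diff has_derivative_ident)
    then have daff: "((\<lambda>z. w + J (z - Js w)) has_derivative J) (at (Js w))" by simp
    have dQw: "(PJ has_derivative V') (at (w + J (Js w - Js w)))" using dQ unfolding w_def by (simp add: lsimps)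
    define W where "W v = Js (V' (J v))" for v
    have dP: "(P has_derivative W) (at (Js w))"
    proof -
      have "((\<lambda>z. Js (PJ (w + J (z - Js w)))) has_derivative (\<lambda>v. Js (V' (J v)))) (at (Js w))"
        by (intro bounded_linear.has_derivative[OF blJs] has_derivative_compose[OF daff dQw])
      then show ?thesis unfolding W_def[abs_def] by (subst Peq)
    qed
    have PJeq: "PJ = (\<lambda>z. J (P (Js z)))" by (rule ext) (simp add: Rel1)
    have "((\<lambda>z. P (Js z)) has_derivative (\<lambda>v. W (Js v))) (at w)"
      using has_derivative_compose[of Js Js w UNIV P W] bounded_linear_imp_has_derivative[OF blJs] dP by simp
    then have "((\<lambda>z. J (P (Js z))) has_derivative (\<lambda>v. J (W (Js v)))) (at w)"
      by (rule bounded_linear.has_derivative[OF blJ])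
    then have dPJ: "(PJ has_derivative (\<lambda>v. J (W (Js v)))) (at w)" by (subst PJeq)
    have Veq: "V' = (\<lambda>v. J (W (Js v)))"
      by (rule has_derivative_unique[OF _ dPJ]) (use dQ w_def in simp)
    have hn': "norm (Js h) < \<delta>" using normJs[of h] hn by linarith
    have Jsw: "Js w = Js y + Js h" unfolding w_def by (simp add: lsimps)
    have "PJ (y + h) - PJ y - V' h = J (P (Js y + Js h) - P (Js y) - W (Js h))"
      unfolding Veq by (simp add: Rel1 lsimps Jsw[unfolded w_def])
    then have "norm (PJ (y + h) - PJ y - V' h) = norm (P (Js y + Js h) - P (Js y) - W (Js h))"
      by (simp add: nJ)
    also have "\<dots> \<le> C * norm (Js h) powr (1 + p)"
      using H[OF hn', of W] dP unfolding Jsw by simp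
    also have "\<dots> \<le> \<bar>C\<bar> * norm (Js h) powr (1 + p)" by (intro mult_right_mono) auto
    also have "\<dots> \<le> \<bar>C\<bar> * norm h powr (1 + p)"
      using p normJs[of h] by (intro mult_left_mono powr_mono2) auto
    finally show ?thesis .
  qed
  then show ?thesis unfolding ssD_def using d0 by blast
qed

lemma ss_bw: assumes "ssD p PJ (J x)" and p: "p > 0" shows "ssD p P x"
proof -
  obtain C \<delta> where d0: "\<delta> > 0" and H: "\<And>h f'. norm h < \<delta> \<Longrightarrow> (PJ has_derivative f') (at (J x + h)) \<Longrightarrow>
      norm (PJ (J x + h) - PJ (J x) - f' h) \<le> C * norm h powr (1 + p)"
    using assms unfolding ssD_def by blast
  have "norm (P (x + h) - P x - W h) \<le> C * norm h powr (1 + p)"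
    if hn: "norm h < \<delta>" and dP: "(P has_derivative W) (at (x + h))" for h W
  proof -
    have PJeq: "PJ = (\<lambda>z. J (P (Js z)))" by (rule ext) (simp add: Rel1)
    have dP': "(P has_derivative W) (at (Js (J x + J h)))" using dP by (simp add: JsJ lsimps[symmetric])
    have "((\<lambda>z. P (Js z)) has_derivative (\<lambda>v. W (Js v))) (at (J x + J h))"
      using has_derivative_compose[of Js Js "J x + J h" UNIV P W] bounded_linear_imp_has_derivative[OF blJs] dP' by simp
    then have "((\<lambda>z. J (P (Js z))) has_derivative (\<lambda>v. J (W (Js v)))) (at (J x + J h))"
      by (rule bounded_linear.has_derivative[OF blJ])
    then have dPJ: "(PJ has_derivative (\<lambda>v. J (W (Js v)))) (at (J x + J h))" by (subst PJeq)
    have hn': "norm (J h) < \<delta>" using hn by (simp add: nJ)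
    have "PJ (J x + J h) - PJ (J x) - J (W (Js (J h))) = J (P (x + h) - P x - W h)"
      by (simp add: Rel1 JsJ lsimps)
    then have "norm (P (x + h) - P x - W h) = norm (PJ (J x + J h) - PJ (J x) - J (W (Js (J h))))"
      by (simp add: nJ)
    also have "\<dots> \<le> C * norm (J h) powr (1 + p)"
      using H[OF hn' dPJ] .
    finally show ?thesis by (simp add: nJ)
  qed
  then show ?thesis unfolding ssD_def using d0 by blast
qed

lemma iso_semismooth:
  assumes p: "p > 0"
  shows "semismooth p P \<longleftrightarrow> semismooth p PJ"
proof -
  have "semismooth p P \<longleftrightarrow> (\<forall>x. dir_differentiable_at P x) \<and> (\<forall>x. ssD p P x)"
    using proj_semismooth_iff[OF cS clS neS p] .
  moreover have "semismooth p PJ \<longleftrightarrow> (\<forall>x. dir_differentiable_at PJ x) \<and> (\<forall>x. ssD p PJ x)"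
    using proj_semismooth_iff[OF cJS clJS neJS p] .
  ultimately show ?thesis using dir_fw dir_bw ss_fw ss_bw p by blast
qed

end

lemma isoJ_JsJ:
  fixes J :: "'a::euclidean_space \<Rightarrow> 'b::euclidean_space"
  assumes linJ: "linear J" and nJ: "\<And>x. norm (J x) = norm x"
  shows "adjoint J (J x) = x"
proof -
  have blJ: "bounded_linear J" using linJ linear_conv_bounded_linear by blast
  have innJ: "inner (J u) (J v) = inner u v" for u v
  proof -
    have "inner (J (u + v)) (J (u + v)) = inner (u + v) (u + v)"
      using nJ[of "u + v"] by (simp add: dot_square_norm)
    moreover have "inner (J u) (J u) = inner u u" "inner (J v) (J v) = inner v v"
      using nJ[of u] nJ[of v] by (simp_all add: dot_square_norm)
    ultimately show ?thesis
      by (simp add: linear_simps[OF blJ] inner_add_left inner_add_right inner_commute)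
  qed
  have "\<forall>z. inner z (adjoint J (J x)) = inner z x" using adjoint_works[OF linJ] innJ by metis
  then show ?thesis using vector_eq_ldot by blast
qed

theorem lemma2:
  fixes A :: "'a::euclidean_space \<Rightarrow> 'b::euclidean_space"
    and K :: "'a set" and p :: real
  assumes "linear A" and "inj A"
    and "K \<noteq> {}" and "closed K" and "convex K"
    and "p > 0"
  shows "semismooth p (closest_point K) \<longleftrightarrow> semismooth p (closest_point (A ` K))"
proof -
  note linA = assms(1) and injA = assms(2) and neK = assms(3) and clK = assms(4) and cK = assms(5)
    and p = assms(6)
  have subA: "subspace (range A)" by (rule linear_subspace_image[OF linA subspace_UNIV])
  have dimA: "dim (UNIV :: 'a set) = dim (range A)"
    using dim_image_eq[OF linA, of UNIV] injA by (simp add: inj_on_def)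
  obtain J :: "'a \<Rightarrow> 'b" where J: "linear J" "J ` UNIV = range A"
    "\<And>x. norm (J x) = norm x"
    using isometries_subspaces[OF subspace_UNIV subA dimA] by (metis UNIV_I)
  define B where "B x = adjoint J (A x)" for x
  have AJB: "A x = J (B x)" for x
  proof -
    obtain z where z: "A x = J z" using J(2) by (metis rangeI image_iff)
    then show ?thesis unfolding B_def z using isoJ_JsJ[OF J(1) J(3)] by simp
  qed
  have linB: "linear B"
  proof -
    have "linear (adjoint J \<circ> A)" using linear_compose[OF linA adjoint_linear[OF J(1)]] .
    moreover have "adjoint J \<circ> A = B" by (rule ext) (simp add: B_def)
    ultimately show ?thesis by simp
  qed
  have injB: "inj B"
  proof (rule injI)
    fix x y assume "B x = B y"
    then have "A x = A y" using AJB by metis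
    then show "x = y" using injA by (simp add: inj_eq)
  qed
  have surjB: "surj B" using linear_inj_imp_surj[OF linB injB] .
  obtain Bi where linBi: "linear Bi" and BiB': "Bi \<circ> B = id"
    using linear_injective_left_inverse[OF linB injB] by blast
  have BiB: "Bi (B x) = x" for x using BiB' by (metis comp_apply id_apply)
  have BBi: "B (Bi y) = y" for y
  proof -
    obtain x where "y = B x" using surjB by (metis surjD)
    then show ?thesis using BiB by simp
  qed
  have c1: "core B Bi K" unfolding core_def using linB linBi BBi BiB cK clK neK by blast
  have cBK: "convex (B ` K)" "closed (B ` K)" "B ` K \<noteq> {}"
    using core.cBK[OF c1] core.clBK[OF c1] core.neBK[OF c1] by auto
  have c2: "core Bi B (B ` K)" unfolding core_def using linB linBi BBi BiB cBK by blast
  have BiBK: "Bi ` (B ` K) = K" by (simp add: image_image BiB)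
  have AK: "A ` K = J ` (B ` K)" by (simp add: image_image AJB)
  have i: "iso J (B ` K)" unfolding iso_def using J(1) J(3) cBK by blast
  have "semismooth p (closest_point K) \<longleftrightarrow> semismooth p (closest_point (B ` K))"
    using core.core_ss[OF c1 _ p] core.core_ss[OF c2 _ p] unfolding BiBK by blast
  also have "\<dots> \<longleftrightarrow> semismooth p (closest_point (J ` (B ` K)))"
    using iso.iso_semismooth[OF i p] .
  finally show ?thesis unfolding AK .
qed


end
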